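(* Let $G\le\mathrm{O}(d)$ have closed orbits. For all $x,y\in\mathbb{R}^d$ there exists a bijection from $C([x],[y])$ to the set of orbits of the group $\mathrm{stab}_G(x)$ acting on $\arg\min_{q\in[y]}\|q-x\|$.
   Context: For $x\in\mathbb{R}^d$, $[x]:=\{gx:g\in G\}$, and $\mathbb{R}^d/G$ has the quotient metric $d([x],[y]):=\inf_{p\in[x],q\in[y]}\|p-q\|$. In a metric space $(M,d)$, a curve $\gamma:[0,L]\to M$ with $L\ge0$ is a minimal geodesic if $d(\gamma(s),\gamma(t))=|s-t|$ for all $s,t\in[0,L]$; for $a,b\in M$, $C(a,b)$ is the set of minimal geodesics $\gamma$ with $\gamma(0)=a$ and $\gamma(L)=b$ (so $L=d(a,b)$). The group $\mathrm{stab}_G(x)$ acts on $\arg\min_{q\in[y]}\|q-x\|$ by $q\mapsto gq$. *)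

theory Defs
  imports "HOL-Analysis.Analysis" "HOL-Library.FuncSet"
begin

definition orth_subgroup :: "(real^'n^'n) set \<Rightarrow> bool" where
  "orth_subgroup G \<longleftrightarrow> (\<forall>g\<in>G. orthogonal_matrix g) \<and> mat 1 \<in> G \<and>
     (\<forall>g\<in>G. \<forall>h\<in>G. g ** h \<in> G) \<and> (\<forall>g\<in>G. matrix_inv g \<in> G)"

definition orb :: "(real^'n^'n) set \<Rightarrow> real^'n \<Rightarrow> (real^'n) set" where
  "orb G x = {g *v x | g. g \<in> G}"

definition orbit_space :: "(real^'n^'n) set \<Rightarrow> (real^'n) set set" where
  "orbit_space G = {orb G x | x. True}"

definition qdist :: "(real^'n) set \<Rightarrow> (real^'n) set \<Rightarrow> real" where
  "qdist A B = Inf {norm (p - q) | p q. p \<in> A \<and> q \<in> B}"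

definition min_geodesic :: "'a set \<Rightarrow> ('a \<Rightarrow> 'a \<Rightarrow> real) \<Rightarrow> real \<Rightarrow> (real \<Rightarrow> 'a) \<Rightarrow> bool" where
  "min_geodesic M dst L \<gamma> \<longleftrightarrow> L \<ge> 0 \<and> \<gamma> \<in> {0..L} \<rightarrow>\<^sub>E M \<and>
     (\<forall>s\<in>{0..L}. \<forall>t\<in>{0..L}. dst (\<gamma> s) (\<gamma> t) = \<bar>s - t\<bar>)"

definition geodesics_between :: "'a set \<Rightarrow> ('a \<Rightarrow> 'a \<Rightarrow> real) \<Rightarrow> 'a \<Rightarrow> 'a \<Rightarrow> (real \<Rightarrow> 'a) set" where
  "geodesics_between M dst a b =
     {\<gamma>. min_geodesic M dst (dst a b) \<gamma> \<and> \<gamma> 0 = a \<and> \<gamma> (dst a b) = b}"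

definition stab :: "(real^'n^'n) set \<Rightarrow> real^'n \<Rightarrow> (real^'n^'n) set" where
  "stab G x = {g \<in> G. g *v x = x}"

definition closest_points :: "(real^'n^'n) set \<Rightarrow> real^'n \<Rightarrow> real^'n \<Rightarrow> (real^'n) set" where
  "closest_points G x y =
     {q \<in> orb G y. \<forall>q'\<in>orb G y. norm (q - x) \<le> norm (q' - x)}"

definition action_orbits :: "(real^'n^'n) set \<Rightarrow> (real^'n) set \<Rightarrow> (real^'n) set set" where
  "action_orbits H S = {{g *v q | g. g \<in> H} | q. q \<in> S}"

end

theory Submission
  imports Defs
begin

lemma r1: fixes L s x q z w :: real
  assumes "L > 0" "(L/2)*(z - w) = (L/2 - s)*(q - z)" "z = x + (1/2)*(q - x)"
  shows "w = x + s/L*(q - x)"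
proof -
  have "L * w = L * x + s*(q - x)" using assms(2) unfolding assms(3) by (simp add: field_simps)
  then show ?thesis using assms(1) by (simp add: field_simps)
qed
lemma r2: fixes L s x q z w :: real
  assumes "L > 0" "(s - L/2)*(z - x) = (L/2)*(w - z)" "z = x + (1/2)*(q - x)"
  shows "w = x + s/L*(q - x)"
proof -
  have "L * w = L * x + s*(q - x)" using assms(2) unfolding assms(3) by (simp add: field_simps)
  then show ?thesis using assms(1) by (simp add: field_simps)
qed

context
  fixes G :: "(real^'n^'n) set"
  assumes OG: "orth_subgroup G" and CL: "\<forall>z. closed (orb G z)"
begin

lemma G_orth: "g \<in> G \<Longrightarrow> orthogonal_matrix g"
  using OG unfolding orth_subgroup_def by blast

lemma G_norm: "g \<in> G \<Longrightarrow> norm (g *v v) = norm v"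
proof -
  assume "g \<in> G"
  then have "orthogonal_transformation ((*v) g)"
    using G_orth orthogonal_transformation_matrix[of "(*v) g"] matrix_vector_mul_linear by auto
  then show ?thesis by (simp add: orthogonal_transformation_norm)
qed

lemma G_inv: "g \<in> G \<Longrightarrow> \<exists>h\<in>G. h ** g = mat 1 \<and> g ** h = mat 1"
proof -
  assume g: "g \<in> G"
  have ex: "\<exists>A'. g ** A' = mat 1 \<and> A' ** g = mat 1"
    using G_orth[OF g] unfolding orthogonal_matrix_def by blast
  have "g ** matrix_inv g = mat 1 \<and> matrix_inv g ** g = mat 1"
    unfolding matrix_inv_def by (rule someI_ex[OF ex])
  moreover have "matrix_inv g \<in> G" using OG g unfolding orth_subgroup_def by blast
  ultimately show ?thesis by blast
qed

lemma G_mul: "g \<in> G \<Longrightarrow> h \<in> G \<Longrightarrow> g ** h \<in> G"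
  using OG unfolding orth_subgroup_def by blast

lemma G_one: "mat 1 \<in> G"
  using OG unfolding orth_subgroup_def by blast

lemma orb_self: "z \<in> orb G z"
  unfolding orb_def using G_one by force

lemma orb_mem: "g \<in> G \<Longrightarrow> g *v z \<in> orb G z"
  unfolding orb_def by blast

lemma orb_eq: "w \<in> orb G z \<Longrightarrow> orb G w = orb G z"
proof -
  assume "w \<in> orb G z"
  then obtain g where g: "g \<in> G" "w = g *v z" unfolding orb_def by blast
  obtain h where h: "h \<in> G" "h ** g = mat 1" "g ** h = mat 1" using G_inv[OF g(1)] by blast
  show ?thesis
  proof
    show "orb G w \<subseteq> orb G z" unfolding orb_def using g G_mul
      by (auto simp: matrix_vector_mul_assoc)
    show "orb G z \<subseteq> orb G w"
    proof
      fix p assume "p \<in> orb G z"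
      then obtain k where k: "k \<in> G" "p = k *v z" unfolding orb_def by blast
      have hz: "h *v (g *v z) = z" by (simp add: matrix_vector_mul_assoc h)
      have "p = (k ** h) *v w" using k g by (simp add: matrix_vector_mul_assoc[symmetric] hz)
      then show "p \<in> orb G w" using G_mul[OF k(1) h(1)] unfolding orb_def by blast
    qed
  qed
qed

lemma orb_eq_iff: "orb G w = orb G z \<longleftrightarrow> w \<in> orb G z"
  using orb_eq orb_self by metis

lemma orb_dist: "p \<in> orb G a \<Longrightarrow> q \<in> orb G b \<Longrightarrow> \<exists>q'\<in>orb G b. norm (p - q) = norm (a - q')"
proof -
  assume "p \<in> orb G a" "q \<in> orb G b"
  then obtain g k where g: "g \<in> G" "p = g *v a" and k: "k \<in> G" "q = k *v b"
    unfolding orb_def by blast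
  obtain h where h: "h \<in> G" "h ** g = mat 1" "g ** h = mat 1" using G_inv[OF g(1)] by blast
  have "norm (p - q) = norm (h *v (p - q))" using G_norm[OF h(1)] by simp
  also have "h *v (p - q) = a - (h ** k) *v b"
    using g k h by (simp add: matrix_vector_mult_diff_distrib matrix_vector_mul_assoc)
  finally show ?thesis using G_mul[OF h(1) k(1)] unfolding orb_def by blast
qed

lemma qdist_le: "p \<in> orb G a \<Longrightarrow> q \<in> orb G b \<Longrightarrow> qdist (orb G a) (orb G b) \<le> norm (p - q)"
  unfolding qdist_def by (rule cInf_lower) (auto intro: bdd_belowI[where m=0])

lemma qdist_att: "\<exists>q\<in>orb G b. norm (a - q) = qdist (orb G a) (orb G b)"
proof -
  obtain q where q: "q \<in> orb G b" "\<And>y. y \<in> orb G b \<Longrightarrow> dist a q \<le> dist a y"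
    using distance_attains_inf[of "orb G b" a] CL orb_self by blast
  have "qdist (orb G a) (orb G b) \<le> norm (a - q)" using qdist_le[OF orb_self q(1)] .
  moreover have "norm (a - q) \<le> qdist (orb G a) (orb G b)"
    unfolding qdist_def
  proof (rule cInf_greatest)
    show "{norm (p - q) |p q. p \<in> orb G a \<and> q \<in> orb G b} \<noteq> {}" using orb_self by blast
    fix r assume "r \<in> {norm (p - q) |p q. p \<in> orb G a \<and> q \<in> orb G b}"
    then obtain p q' where "p \<in> orb G a" "q' \<in> orb G b" "r = norm (p - q')" by blast
    then obtain q'' where "q'' \<in> orb G b" "r = norm (a - q'')" using orb_dist by metis
    then show "norm (a - q) \<le> r" using q(2)[of q''] by (simp add: dist_norm)
  qed
  ultimately show ?thesis using q(1) by auto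
qed

lemma qdist_sym: "qdist (orb G a) (orb G b) = qdist (orb G b) (orb G a)"
  unfolding qdist_def by (metis (no_types, opaque_lifting) norm_minus_commute)

lemma qdist_sym': "qdist A B = qdist B A"
  unfolding qdist_def by (metis (no_types, opaque_lifting) norm_minus_commute)

lemma qdist_tri: "qdist (orb G a) (orb G c) \<le> qdist (orb G a) (orb G b) + qdist (orb G b) (orb G c)"
proof -
  obtain q where q: "q \<in> orb G b" "norm (a - q) = qdist (orb G a) (orb G b)" using qdist_att by blast
  obtain r where r: "r \<in> orb G c" "norm (q - r) = qdist (orb G q) (orb G c)" using qdist_att by blast
  have "qdist (orb G a) (orb G c) \<le> norm (a - r)" using qdist_le[OF orb_self r(1)] .
  also have "\<dots> \<le> norm (a - q) + norm (q - r)" using norm_triangle_ineq[of "a - q" "q - r"] by simp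
  finally show ?thesis using q r orb_eq[OF q(1)] by simp
qed

lemma qdist_nonneg: "0 \<le> qdist (orb G a) (orb G b)"
  using qdist_att[of b a] by (metis norm_ge_zero)

lemma tri_eq:
  fixes a b :: "real^'n"
  assumes "norm a = r1" "norm b = r2" "norm (a + b) = r1 + r2"
  shows "r2 *\<^sub>R a = r1 *\<^sub>R b"
  using norm_triangle_eq[of a b] assms by simp

context
  fixes x y :: "real^'n"
begin

abbreviation "LL \<equiv> qdist (orb G x) (orb G y)"

definition Phi :: "real^'n \<Rightarrow> real \<Rightarrow> (real^'n) set" where
  "Phi q = (\<lambda>s. if s \<in> {0..LL} then orb G (x + (s / LL) *\<^sub>R (q - x)) else undefined)"

lemma CP_props: "q \<in> closest_points G x y \<Longrightarrow> q \<in> orb G y \<and> norm (q - x) = LL"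
proof -
  assume q: "q \<in> closest_points G x y"
  then have q1: "q \<in> orb G y" and q2: "\<And>q'. q' \<in> orb G y \<Longrightarrow> norm (q - x) \<le> norm (q' - x)"
    unfolding closest_points_def by auto
  obtain q0 where q0: "q0 \<in> orb G y" "norm (x - q0) = LL" using qdist_att by blast
  have "LL \<le> norm (x - q)" using qdist_le[OF orb_self q1] .
  moreover have "norm (q - x) \<le> norm (q0 - x)" using q2[OF q0(1)] .
  ultimately show ?thesis using q1 q0 by (simp add: norm_minus_commute)
qed

lemma CP_intro: "q \<in> orb G y \<Longrightarrow> norm (q - x) \<le> LL \<Longrightarrow> q \<in> closest_points G x y"
  unfolding closest_points_def using qdist_le[OF orb_self]
  by (auto simp: norm_minus_commute intro: order_trans)

lemma Phi_dist_le:
  assumes q: "q \<in> closest_points G x y" and st: "0 \<le> s" "s \<le> t" "t \<le> LL"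
  shows "qdist (orb G (x + (s / LL) *\<^sub>R (q - x))) (orb G (x + (t / LL) *\<^sub>R (q - x))) = t - s"
proof (cases "LL = 0")
  case True
  then have "s = 0" "t = 0" using st by auto
  then show ?thesis using qdist_le[OF orb_self orb_self, of x x] qdist_nonneg[of x x] by simp
next
  case False
  then have Lp: "LL > 0" using qdist_nonneg[of x y] by simp
  have nq: "norm (q - x) = LL" using CP_props[OF q] by simp
  let ?p = "\<lambda>s. x + (s / LL) *\<^sub>R (q - x)"
  have np: "norm (?p a - ?p b) = \<bar>a - b\<bar>" for a b
  proof -
    have "?p a - ?p b = ((a - b) / LL) *\<^sub>R (q - x)" by (simp add: algebra_simps diff_divide_distrib)
    then show ?thesis using nq Lp by simp
  qed
  have le1: "qdist (orb G (?p s)) (orb G (?p t)) \<le> t - s"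
    using qdist_le[OF orb_self orb_self, of "?p s" "?p t"] np[of s t] st by simp
  have a1: "qdist (orb G x) (orb G (?p s)) \<le> s"
    using qdist_le[OF orb_self orb_self, of x "?p s"] np[of 0 s] st by simp
  have "norm (?p t - q) = LL - t"
  proof -
    have "?p t - q = ((t - LL) / LL) *\<^sub>R (q - x)" using Lp by (simp add: algebra_simps diff_divide_distrib)
    then show ?thesis using nq Lp st by (simp add: abs_div_pos divide_simps)
  qed
  then have a2: "qdist (orb G (?p t)) (orb G y) \<le> LL - t"
    using qdist_le[OF orb_self, of q y "?p t"] CP_props[OF q] by simp
  have "LL \<le> qdist (orb G x) (orb G (?p s)) + qdist (orb G (?p s)) (orb G y)" by (rule qdist_tri)
  also have "qdist (orb G (?p s)) (orb G y) \<le> qdist (orb G (?p s)) (orb G (?p t)) + qdist (orb G (?p t)) (orb G y)"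
    by (rule qdist_tri)
  finally show ?thesis using le1 a1 a2 by linarith
qed

lemma Phi_geo:
  assumes q: "q \<in> closest_points G x y"
  shows "Phi q \<in> geodesics_between (orbit_space G) qdist (orb G x) (orb G y)"
proof -
  have L0: "LL \<ge> 0" by (rule qdist_nonneg)
  have nq: "norm (q - x) = LL" "q \<in> orb G y" using CP_props[OF q] by auto
  have endL: "Phi q LL = orb G y"
  proof (cases "LL = 0")
    case True
    then have "q = x" using nq by simp
    then show ?thesis using True L0 orb_eq[OF nq(2)] by (simp add: Phi_def)
  next
    case False
    then show ?thesis using L0 orb_eq[OF nq(2)] by (simp add: Phi_def)
  qed
  have dist: "qdist (Phi q s) (Phi q t) = \<bar>s - t\<bar>" if "s \<in> {0..LL}" "t \<in> {0..LL}" for s t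
  proof (cases "s \<le> t")
    case True
    then show ?thesis using that Phi_dist_le[OF q, of s t] by (simp add: Phi_def)
  next
    case False
    then show ?thesis using that Phi_dist_le[OF q, of t s] by (simp add: Phi_def, subst qdist_sym', simp)
  qed
  have "Phi q \<in> {0..LL} \<rightarrow>\<^sub>E orbit_space G"
    unfolding Phi_def orbit_space_def by auto
  then show ?thesis using L0 dist endL unfolding geodesics_between_def min_geodesic_def
    by (simp add: Phi_def)
qed

lemma stab_act:
  assumes h: "h \<in> stab G x" and q: "q \<in> closest_points G x y"
  shows "h *v q \<in> closest_points G x y" "Phi (h *v q) = Phi q"
proof -
  have hG: "h \<in> G" and hx: "h *v x = x" using h unfolding stab_def by auto
  have nq: "norm (q - x) = LL" "q \<in> orb G y" using CP_props[OF q] by auto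
  have "h *v q \<in> orb G y" using orb_eq[OF nq(2)] orb_mem[OF hG, of q] by simp
  moreover have "norm (h *v q - x) = LL"
    using G_norm[OF hG, of "q - x"] nq hx by (simp add: matrix_vector_mult_diff_distrib)
  ultimately show "h *v q \<in> closest_points G x y" by (simp add: CP_intro)
  have E: "orb G (x + c *\<^sub>R (h *v q - x)) = orb G (x + c *\<^sub>R (q - x))" for c
  proof -
    have "x + c *\<^sub>R (h *v q - x) = h *v (x + c *\<^sub>R (q - x))"
      using hx by (simp add: algebra_simps)
    then show ?thesis using orb_eq[OF orb_mem[OF hG]] by simp
  qed
  show "Phi (h *v q) = Phi q" unfolding Phi_def by (rule ext) (simp only: E)
qed

lemma Phi_inj:
  assumes q: "q \<in> closest_points G x y" and q': "q' \<in> closest_points G x y"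
    and eq: "Phi q = Phi q'"
  shows "\<exists>h\<in>stab G x. h *v q' = q"
proof (cases "LL = 0")
  case True
  then have "q = x" "q' = x" using CP_props[OF q] CP_props[OF q'] by auto
  then show ?thesis using G_one unfolding stab_def by auto
next
  case False
  then have Lp: "LL > 0" using qdist_nonneg[of x y] by simp
  have nq: "norm (q - x) = LL" "q \<in> orb G y" using CP_props[OF q] by auto
  have nq': "norm (q' - x) = LL" "q' \<in> orb G y" using CP_props[OF q'] by auto
  define m where "m = x + (1/2) *\<^sub>R (q - x)"
  define m' where "m' = x + (1/2) *\<^sub>R (q' - x)"
  have "Phi q (LL/2) = Phi q' (LL/2)" using eq by simp
  then have "orb G m = orb G m'" using Lp unfolding Phi_def m_def m'_def by simp
  then have "m \<in> orb G m'" using orb_eq_iff by blast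
  then obtain g where g: "g \<in> G" "g *v m' = m" unfolding orb_def by blast
  have na: "norm (g *v x - m) = LL/2"
  proof -
    have "g *v x - m = g *v (x - m')" using g by (simp add: matrix_vector_mult_diff_distrib)
    then show ?thesis using G_norm[OF g(1)] nq' by (simp add: m'_def)
  qed
  have nb: "norm (m - q) = LL/2"
  proof -
    have "m - q = (-1/2) *\<^sub>R (q - x)" by (simp add: m_def vec_eq_iff field_simps)
    then show ?thesis using nq by simp
  qed
  have nab: "norm ((g *v x - m) + (m - q)) = LL/2 + LL/2"
  proof -
    obtain q'' where "q'' \<in> orb G y" "norm (g *v x - q) = norm (x - q'')"
      using orb_dist[OF orb_mem[OF g(1)] nq(2)] by blast
    then have "LL \<le> norm (g *v x - q)" using qdist_le[OF orb_self] by metis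
    moreover have "norm (g *v x - q) \<le> norm (g *v x - m) + norm (m - q)"
      using norm_triangle_ineq[of "g *v x - m" "m - q"] by simp
    ultimately show ?thesis using na nb by simp
  qed
  have "(LL/2) *\<^sub>R (g *v x - m) = (LL/2) *\<^sub>R (m - q)" by (rule tri_eq[OF na nb nab])
  then have "g *v x - m = m - q" using Lp by simp
  then have "g *v x = 2 *\<^sub>R m - q" by (simp add: vec_eq_iff field_simps)
  then have gx: "g *v x = x" by (simp add: m_def vec_eq_iff field_simps)
  have "g *v q' = q"
  proof -
    have "q' = 2 *\<^sub>R m' - x" by (simp add: m'_def vec_eq_iff field_simps)
    then have "g *v q' = g *v (2 *\<^sub>R m' - x)" by simp
    also have "\<dots> = 2 *\<^sub>R (g *v m') - g *v x"
      by (simp only: matrix_vector_mult_diff_distrib matrix_vector_mult_scaleR)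
    finally have "g *v q' = 2 *\<^sub>R (g *v m') - g *v x" .
    then show ?thesis using g gx by (simp add: m_def vec_eq_iff field_simps)
  qed
  then show ?thesis using g gx unfolding stab_def by auto
qed

lemma Phi_surj:
  assumes gam: "\<gamma> \<in> geodesics_between (orbit_space G) qdist (orb G x) (orb G y)"
  shows "\<exists>q\<in>closest_points G x y. \<gamma> = Phi q"
proof -
  have L0: "LL \<ge> 0" and PE: "\<gamma> \<in> {0..LL} \<rightarrow>\<^sub>E orbit_space G"
    and D: "\<And>s t. s \<in> {0..LL} \<Longrightarrow> t \<in> {0..LL} \<Longrightarrow> qdist (\<gamma> s) (\<gamma> t) = \<bar>s - t\<bar>"
    and g0: "\<gamma> 0 = orb G x" and gL: "\<gamma> LL = orb G y"
  proof -
    have MG: "min_geodesic (orbit_space G) qdist LL \<gamma>" and "\<gamma> 0 = orb G x" "\<gamma> LL = orb G y"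
      using gam unfolding geodesics_between_def by blast+
    moreover have "LL \<ge> 0" "\<gamma> \<in> {0..LL} \<rightarrow>\<^sub>E orbit_space G"
      "\<And>s t. s \<in> {0..LL} \<Longrightarrow> t \<in> {0..LL} \<Longrightarrow> qdist (\<gamma> s) (\<gamma> t) = \<bar>s - t\<bar>"
      using MG unfolding min_geodesic_def by blast+
    ultimately show "LL \<ge> 0" "\<gamma> \<in> {0..LL} \<rightarrow>\<^sub>E orbit_space G"
      "\<And>s t. s \<in> {0..LL} \<Longrightarrow> t \<in> {0..LL} \<Longrightarrow> qdist (\<gamma> s) (\<gamma> t) = \<bar>s - t\<bar>"
      "\<gamma> 0 = orb G x" "\<gamma> LL = orb G y" by blast+
  qed
  have orbs: "\<exists>w. \<gamma> s = orb G w" if "s \<in> {0..LL}" for s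
  proof -
    have "\<gamma> s \<in> orbit_space G" using PE that by (rule PiE_mem)
    then show ?thesis unfolding orbit_space_def by auto
  qed
  have outside: "\<gamma> s = undefined" if "s \<notin> {0..LL}" for s
    by (rule PiE_arb[OF PE that])
  show ?thesis
  proof (cases "LL = 0")
    case True
    obtain q0 where q0: "q0 \<in> orb G y" "norm (x - q0) = LL" using qdist_att by blast
    then have "x \<in> orb G y" using True by simp
    then have xc: "x \<in> closest_points G x y" using CP_intro True by simp
    have "\<gamma> = Phi x"
    proof
      fix s show "\<gamma> s = Phi x s"
      proof (cases "s \<in> {0..LL}")
        case True
        then have "s = 0" using \<open>LL = 0\<close> by simp
        then show ?thesis using g0 True by (simp add: Phi_def)
      next
        case False
        then show ?thesis using outside[OF False] False unfolding Phi_def by auto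
      qed
    qed
    then show ?thesis using xc by blast
  next
    case False
    then have Lp: "LL > 0" using L0 by simp
    have mid: "LL/2 \<in> {0..LL}" using Lp by simp
    obtain w0 where w0: "\<gamma> (LL/2) = orb G w0" using orbs[OF mid] by blast
    obtain z where z: "z \<in> orb G w0" "norm (x - z) = qdist (orb G x) (orb G w0)"
      using qdist_att by blast
    have oz: "orb G z = \<gamma> (LL/2)" using orb_eq[OF z(1)] w0 by simp
    have nz: "norm (z - x) = LL/2"
      using z(2) D[of 0 "LL/2"] g0 w0 Lp mid by (simp add: norm_minus_commute)
    obtain q where q: "q \<in> orb G y" "norm (z - q) = qdist (orb G z) (orb G y)"
      using qdist_att by blast
    have nq: "norm (q - z) = LL/2"
      using q(2) D[of "LL/2" LL] oz gL Lp mid by (simp add: norm_minus_commute)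
    have "norm (q - x) \<le> norm (z - x) + norm (q - z)"
      using norm_triangle_ineq[of "z - x" "q - z"] by simp
    then have qc: "q \<in> closest_points G x y" using CP_intro[OF q(1)] nz nq by simp
    have nqx: "norm ((z - x) + (q - z)) = LL/2 + LL/2" using CP_props[OF qc] by simp
    have "(LL/2) *\<^sub>R (z - x) = (LL/2) *\<^sub>R (q - z)" by (rule tri_eq[OF nz nq nqx])
    then have zxq: "z - x = q - z" using Lp by simp
    have zi: "z $ i = x $ i + (1/2) * (q $ i - x $ i)" for i
      using arg_cong[OF zxq, of "\<lambda>v. v $ i"] by (simp add: field_simps)
    have zm: "z = x + (1/2) *\<^sub>R (q - x)" by (simp add: vec_eq_iff zi)
    have "\<gamma> s = Phi q s" for s
    proof (cases "s \<in> {0..LL}")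
      case False
      then show ?thesis using outside[OF False] False unfolding Phi_def by auto
    next
      case True
      note s = True
      obtain w' where w': "\<gamma> s = orb G w'" using orbs[OF s] by blast
      obtain w where w: "w \<in> orb G w'" "norm (z - w) = qdist (orb G z) (orb G w')"
        using qdist_att by blast
      have ow: "orb G w = \<gamma> s" using orb_eq[OF w(1)] w' by simp
      have nw: "norm (w - z) = \<bar>LL/2 - s\<bar>"
        using w(2) D[of "LL/2" s] oz w' s mid by (simp add: norm_minus_commute)
      have weq: "w = x + (s / LL) *\<^sub>R (q - x)"
      proof (cases "s \<le> LL/2")
        case True
        have a: "norm (z - w) = LL/2 - s" using nw True by (simp add: norm_minus_commute)
        have "LL - s \<le> norm (q - w)"
          using qdist_le[OF orb_self q(1), of w] D[of s LL] ow gL s Lp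
          by (simp add: norm_minus_commute)
        moreover have "norm (q - w) \<le> norm (z - w) + norm (q - z)"
          using norm_triangle_ineq[of "z - w" "q - z"] by simp
        ultimately have "norm ((z - w) + (q - z)) = (LL/2 - s) + LL/2" using a nq by simp
        then have "(LL/2) *\<^sub>R (z - w) = (LL/2 - s) *\<^sub>R (q - z)" by (rule tri_eq[OF a nq])
        then have "\<forall>i. (LL/2) * (z $ i - w $ i) = (LL/2 - s) * (q $ i - z $ i)"
          by (simp add: vec_eq_iff)
        then show ?thesis using zm r1[OF Lp] by (simp add: vec_eq_iff)
      next
        case False
        have a: "norm (w - z) = s - LL/2" using nw False by simp
        have "s \<le> norm (x - w)"
          using qdist_le[OF orb_self orb_self, of x w] D[of 0 s] ow g0 s Lp
          by (simp add: norm_minus_commute)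
        moreover have "norm (w - x) \<le> norm (z - x) + norm (w - z)"
          using norm_triangle_ineq[of "z - x" "w - z"] by simp
        ultimately have "norm ((z - x) + (w - z)) = LL/2 + (s - LL/2)" using a nz
          by (simp add: norm_minus_commute)
        then have "(s - LL/2) *\<^sub>R (z - x) = (LL/2) *\<^sub>R (w - z)" by (rule tri_eq[OF nz a])
        then have "\<forall>i. (s - LL/2) * (z $ i - x $ i) = (LL/2) * (w $ i - z $ i)"
          by (simp add: vec_eq_iff)
        then show ?thesis using zm r2[OF Lp] by (simp add: vec_eq_iff)
      qed
      show ?thesis using ow weq s by (simp add: Phi_def)
    qed
    then show ?thesis using qc by blast
  qed
qed

lemma stab_one: "mat 1 \<in> stab G x"
  using G_one unfolding stab_def by simp

lemma stab_orbit_eq: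
  assumes h: "h \<in> stab G x"
  shows "{g *v (h *v q) | g. g \<in> stab G x} = {g *v q | g. g \<in> stab G x}"
proof -
  have hG: "h \<in> G" and hx: "h *v x = x" using h unfolding stab_def by auto
  obtain h' where h': "h' \<in> G" "h' ** h = mat 1" "h ** h' = mat 1" using G_inv[OF hG] by blast
  have "h' *v x = x" using hx h' by (metis matrix_vector_mul_assoc matrix_vector_mul_lid)
  then have h's: "h' \<in> stab G x" using h' unfolding stab_def by simp
  show ?thesis
  proof
    show "{g *v (h *v q) | g. g \<in> stab G x} \<subseteq> {g *v q | g. g \<in> stab G x}"
    proof clarify
      fix g assume g: "g \<in> stab G x"
      have "g ** h \<in> stab G x" using g h G_mul unfolding stab_def
        by (auto simp: matrix_vector_mul_assoc[symmetric])
      then show "\<exists>g'. g *v (h *v q) = g' *v q \<and> g' \<in> stab G x"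
        by (auto simp: matrix_vector_mul_assoc)
    qed
    show "{g *v q | g. g \<in> stab G x} \<subseteq> {g *v (h *v q) | g. g \<in> stab G x}"
    proof clarify
      fix g assume g: "g \<in> stab G x"
      have gh: "g ** h' \<in> stab G x" using g h's G_mul unfolding stab_def
        by (auto simp: matrix_vector_mul_assoc[symmetric])
      have "g *v q = (g ** h') *v (h *v q)"
        by (simp add: matrix_vector_mul_assoc matrix_mul_assoc[symmetric] h'(2))
      then show "\<exists>g'. g *v q = g' *v (h *v q) \<and> g' \<in> stab G x" using gh by blast
    qed
  qed
qed

lemma main_bij:
  "\<exists>f. bij_betw f (geodesics_between (orbit_space G) qdist (orb G x) (orb G y))
                       (action_orbits (stab G x) (closest_points G x y))"
proof -
  let ?Os = "action_orbits (stab G x) (closest_points G x y)"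
  let ?Geo = "geodesics_between (orbit_space G) qdist (orb G x) (orb G y)"
  let ?orbq = "\<lambda>q. {g *v q | g. g \<in> stab G x}"
  define F where "F Ob = Phi (SOME q. q \<in> Ob)" for Ob
  have Fq: "F (?orbq q) = Phi q" if q: "q \<in> closest_points G x y" for q
  proof -
    have "q \<in> ?orbq q" unfolding mem_Collect_eq by (intro exI[of _ "mat 1"]) (simp add: stab_one)
    then have "(SOME p. p \<in> ?orbq q) \<in> ?orbq q" by (rule someI)
    then obtain h where h: "h \<in> stab G x" "(SOME p. p \<in> ?orbq q) = h *v q" by blast
    show ?thesis unfolding F_def h(2) using stab_act(2)[OF h(1) q] .
  qed
  have Os: "Ob \<in> ?Os \<longleftrightarrow> (\<exists>q\<in>closest_points G x y. Ob = ?orbq q)" for Ob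
    unfolding action_orbits_def by auto
  have "bij_betw F ?Os ?Geo"
    unfolding bij_betw_def
  proof (intro conjI)
    show "inj_on F ?Os"
    proof (rule inj_onI)
      fix O1 O2 assume "O1 \<in> ?Os" "O2 \<in> ?Os" and e: "F O1 = F O2"
      have "\<exists>q\<in>closest_points G x y. O1 = ?orbq q" by (rule Os[THEN iffD1]) fact
      then obtain q1 where q1: "q1 \<in> closest_points G x y" "O1 = ?orbq q1" ..
      have "\<exists>q\<in>closest_points G x y. O2 = ?orbq q" by (rule Os[THEN iffD1]) fact
      then obtain q2 where q2: "q2 \<in> closest_points G x y" "O2 = ?orbq q2" ..
      have "Phi q1 = Phi q2" using e unfolding q1(2) q2(2) Fq[OF q1(1)] Fq[OF q2(1)] .
      then obtain h where h: "h \<in> stab G x" "h *v q2 = q1" using Phi_inj[OF q1(1) q2(1)] by blast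
      show "O1 = O2" unfolding q1(2) q2(2) h(2)[symmetric] by (rule stab_orbit_eq[OF h(1)])
    qed
    show "F ` ?Os = ?Geo"
    proof
      show "F ` ?Os \<subseteq> ?Geo"
      proof
        fix g assume "g \<in> F ` ?Os"
        then obtain Ob where Ob: "Ob \<in> ?Os" "g = F Ob" by blast
        have "\<exists>q\<in>closest_points G x y. Ob = ?orbq q" by (rule Os[THEN iffD1]) (rule Ob(1))
        then obtain q where q: "q \<in> closest_points G x y" "Ob = ?orbq q" ..
        have "g = Phi q" using Fq[OF q(1)] Ob(2) q(2) by simp
        then show "g \<in> ?Geo" using Phi_geo[OF q(1)] by simp
      qed
      show "?Geo \<subseteq> F ` ?Os"
      proof
        fix \<gamma> assume "\<gamma> \<in> ?Geo"
        then obtain q where q: "q \<in> closest_points G x y" "\<gamma> = Phi q" using Phi_surj by blast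
        have "?orbq q \<in> ?Os" by (rule Os[THEN iffD2], rule bexI[OF refl q(1)])
        have "\<gamma> = F (?orbq q)" using Fq[OF q(1)] q(2) by simp
        then show "\<gamma> \<in> F ` ?Os" using \<open>?orbq q \<in> ?Os\<close> by (rule image_eqI)
      qed
    qed
  qed
  then show ?thesis by (intro exI[of _ "inv_into ?Os F"] bij_betw_inv_into)
qed

end
end
theorem lemma40:
  fixes G :: "(real^'n^'n) set" and x y :: "real^'n"
  assumes "orth_subgroup G"
    and "\<forall>z. closed (orb G z)"
  shows "\<exists>f. bij_betw f (geodesics_between (orbit_space G) qdist (orb G x) (orb G y))
                       (action_orbits (stab G x) (closest_points G x y))"
  by (rule main_bij[OF assms])

end
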